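(* Let $G=(V,E)$ be a connected graph with $n$ vertices and $m\ge1$ edges $e_1,\dots,e_m$ with positive integer weights $w_1,\dots,w_m$, and let $w_{\max}=\max_i w_i$. Consider the (1+1)~EA for the minimum spanning tree problem started with an arbitrary bit string $x^{(0)}\in\{0,1\}^m$ that encodes a spanning tree of $G$. Then its expected optimization time (the expected first time $t$ at which $x^{(t)}$ encodes a minimum spanning tree) is at most $$2\mathrm{e}\, m^2\,(1+\ln m+\ln w_{\max}).$$
   Context: A bit string $x\in\{0,1\}^m$ encodes the edge set $\{e_i: x_i=1\}$; its weight is $w(x)=\sum_{i=1}^m w_ix_i$. The (1+1)~EA for the MST problem, started at a spanning tree $x^{(0)}$: for $t=0,1,2,\dots$, sample $y$ by flipping each bit of $x^{(t)}$ independently with probability $1/m$; set $x^{(t+1)}:=y$ if $y$ encodes a spanning tree of $G$ and $w(y)\le w(x^{(t)})$, and $x^{(t+1)}:=x^{(t)}$ otherwise. (This is the behavior of minimizing the fitness $w(x)+p(x)$ where the penalty $p$ ensures that once a spanning tree is reached, non-spanning-trees are never accepted.) *)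

theory Defs
  imports "HOL-Probability.Probability"
begin

definition simple_graph :: "'a set \<Rightarrow> nat \<Rightarrow> (nat \<Rightarrow> 'a set) \<Rightarrow> bool" where
  "simple_graph V m e \<longleftrightarrow> finite V \<and> (\<forall>i<m. e i \<subseteq> V \<and> card (e i) = 2) \<and> inj_on e {0..<m}"

definition adj :: "(nat \<Rightarrow> 'a set) \<Rightarrow> nat set \<Rightarrow> ('a \<times> 'a) set" where
  "adj e S = {(u, v). \<exists>i\<in>S. e i = {u, v}}"

definition connected_on :: "'a set \<Rightarrow> (nat \<Rightarrow> 'a set) \<Rightarrow> nat set \<Rightarrow> bool" where
  "connected_on V e S \<longleftrightarrow> (\<forall>u\<in>V. \<forall>v\<in>V. (u, v) \<in> (adj e S)\<^sup>*)"

definition has_cycle :: "(nat \<Rightarrow> 'a set) \<Rightarrow> nat set \<Rightarrow> bool" where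
  "has_cycle e S \<longleftrightarrow> (\<exists>vs. length vs \<ge> 3 \<and> distinct vs \<and>
      (\<forall>j<length vs. (vs ! j, vs ! ((j + 1) mod length vs)) \<in> adj e S))"

definition spanning_tree_edges :: "'a set \<Rightarrow> nat \<Rightarrow> (nat \<Rightarrow> 'a set) \<Rightarrow> nat set \<Rightarrow> bool" where
  "spanning_tree_edges V m e S \<longleftrightarrow> S \<subseteq> {0..<m} \<and> connected_on V e S \<and> \<not> has_cycle e S"

text \<open>Bit strings in {0,1}^m are functions nat => bool (only positions < m matter).\<close>
definition edges_of :: "nat \<Rightarrow> (nat \<Rightarrow> bool) \<Rightarrow> nat set" where
  "edges_of m x = {i. i < m \<and> x i}"

definition is_st :: "'a set \<Rightarrow> nat \<Rightarrow> (nat \<Rightarrow> 'a set) \<Rightarrow> (nat \<Rightarrow> bool) \<Rightarrow> bool" where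
  "is_st V m e x \<longleftrightarrow> spanning_tree_edges V m e (edges_of m x)"

definition weight :: "nat \<Rightarrow> (nat \<Rightarrow> nat) \<Rightarrow> (nat \<Rightarrow> bool) \<Rightarrow> nat" where
  "weight m w x = (\<Sum>i<m. w i * (if x i then 1 else 0))"

definition is_mst :: "'a set \<Rightarrow> nat \<Rightarrow> (nat \<Rightarrow> 'a set) \<Rightarrow> (nat \<Rightarrow> nat) \<Rightarrow> (nat \<Rightarrow> bool) \<Rightarrow> bool" where
  "is_mst V m e w x \<longleftrightarrow> is_st V m e x \<and> (\<forall>y. is_st V m e y \<longrightarrow> weight m w x \<le> weight m w y)"

definition ea_step :: "'a set \<Rightarrow> nat \<Rightarrow> (nat \<Rightarrow> 'a set) \<Rightarrow> (nat \<Rightarrow> nat) \<Rightarrow> (nat \<Rightarrow> bool) \<Rightarrow> (nat \<Rightarrow> bool) pmf" where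
  "ea_step V m e w x =
     map_pmf (\<lambda>flip. let y = (\<lambda>i. x i \<noteq> flip i) in
                     if is_st V m e y \<and> weight m w y \<le> weight m w x then y else x)
       (Pi_pmf {0..<m} False (\<lambda>_. bernoulli_pmf (1 / real m)))"

text \<open>Law of the trajectory prefix [x^(0), ..., x^(t)].\<close>
fun ea_traj :: "'a set \<Rightarrow> nat \<Rightarrow> (nat \<Rightarrow> 'a set) \<Rightarrow> (nat \<Rightarrow> nat) \<Rightarrow> (nat \<Rightarrow> bool) \<Rightarrow> nat \<Rightarrow> (nat \<Rightarrow> bool) list pmf" where
  "ea_traj V m e w x0 0 = return_pmf [x0]"
| "ea_traj V m e w x0 (Suc t) =
     bind_pmf (ea_traj V m e w x0 t) (\<lambda>xs. map_pmf (\<lambda>y. xs @ [y]) (ea_step V m e w (last xs)))"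

text \<open>Expected optimization time E[T], T = min{t. x^(t) is an MST}, via the tail-sum
  formula E[T] = sum_{t>=0} P(T > t) (value in [0, infinity]).\<close>
definition expected_opt_time :: "'a set \<Rightarrow> nat \<Rightarrow> (nat \<Rightarrow> 'a set) \<Rightarrow> (nat \<Rightarrow> nat) \<Rightarrow> (nat \<Rightarrow> bool) \<Rightarrow> ennreal" where
  "expected_opt_time V m e w x0 =
     (\<Sum>t. ennreal (measure_pmf.prob (ea_traj V m e w x0 t) {xs. \<forall>y\<in>set xs. \<not> is_mst V m e w y}))"

end

theory Submission
  imports Defs "HOL-Library.Transitive_Closure_Table"
begin


locale sg =
  fixes V :: "'a set" and m :: nat and e :: "nat \<Rightarrow> 'a set"
  assumes sg: "simple_graph V m e"
begin

definition conn where "conn S = (adj e S)\<^sup>*"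
definition cls where "cls S v = {u\<in>V. (v,u) \<in> conn S}"
definition comps where "comps S = card (cls S ` V)"

lemma finV: "finite V" using sg by (simp add: simple_graph_def)

lemma edge: "i < m \<Longrightarrow> \<exists>u v. e i = {u,v} \<and> u \<noteq> v \<and> u \<in> V \<and> v \<in> V"
  using sg unfolding simple_graph_def by (metis card_2_iff insert_subset)

lemma inj: "i < m \<Longrightarrow> j < m \<Longrightarrow> e i = e j \<Longrightarrow> i = j"
  using sg unfolding simple_graph_def inj_on_def by auto

lemma adj_sym: "(a,b) \<in> adj e S \<Longrightarrow> (b,a) \<in> adj e S"
  unfolding adj_def by (auto simp: insert_commute)

lemma conn_sym: "(a,b) \<in> conn S \<Longrightarrow> (b,a) \<in> conn S"
proof -
  have "sym (adj e S)" using adj_sym by (auto simp: sym_def)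
  hence "sym (conn S)" unfolding conn_def by (rule sym_rtrancl)
  thus "(a,b) \<in> conn S \<Longrightarrow> (b,a) \<in> conn S" by (auto simp: sym_def)
qed

lemma conn_trans: "(a,b) \<in> conn S \<Longrightarrow> (b,c) \<in> conn S \<Longrightarrow> (a,c) \<in> conn S"
  unfolding conn_def by (rule rtrancl_trans)

lemma conn_refl[simp]: "(a,a) \<in> conn S" unfolding conn_def by simp

lemma adj_mono: "S \<subseteq> S' \<Longrightarrow> adj e S \<subseteq> adj e S'"
  unfolding adj_def by auto

lemma conn_mono: "S \<subseteq> S' \<Longrightarrow> conn S \<subseteq> conn S'"
  unfolding conn_def by (intro rtrancl_mono adj_mono)

lemma adj_in_conn: "(a,b) \<in> adj e S \<Longrightarrow> (a,b) \<in> conn S"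
  unfolding conn_def by auto

lemma adj_insert: "e i = {u,v} \<Longrightarrow> adj e (insert i S) = adj e S \<union> {(u,v),(v,u)}"
  unfolding adj_def by (auto simp: doubleton_eq_iff)

lemma conn_insert:
  assumes ei: "e i = {u,v}"
  shows "conn (insert i S) = conn S \<union> {(a,b). (a,u) \<in> conn S \<and> (v,b) \<in> conn S \<or> (a,v) \<in> conn S \<and> (u,b) \<in> conn S}"
    (is "_ = ?R")
proof
  show "conn (insert i S) \<subseteq> ?R"
  proof
    fix p assume "p \<in> conn (insert i S)"
    then obtain a b where p: "p = (a,b)" and ab: "(a,b) \<in> (adj e S \<union> {(u,v),(v,u)})\<^sup>*"
      unfolding conn_def adj_insert[OF ei] by (cases p) auto
    from ab have "(a,b) \<in> ?R"
    proof (induction rule: rtrancl_induct)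
      case base then show ?case by simp
    next
      case (step y z)
      from step.hyps(2) consider "(y,z) \<in> adj e S" | "y = u" "z = v" | "y = v" "z = u" by auto
      then show ?case
      proof cases
        case 1 then have "(y,z) \<in> conn S" by (rule adj_in_conn)
        with step.IH show ?thesis by (auto intro: conn_trans)
      next
        case 2 with step.IH show ?thesis by (auto intro: conn_trans conn_sym)
      next
        case 3 with step.IH show ?thesis by (auto intro: conn_trans conn_sym)
      qed
    qed
    thus "p \<in> ?R" using p by simp
  qed
next
  have s: "conn S \<subseteq> conn (insert i S)" by (rule conn_mono) auto
  have uv: "(u,v) \<in> conn (insert i S)" "(v,u) \<in> conn (insert i S)"
    using ei by (auto intro!: adj_in_conn simp: adj_def)
  show "?R \<subseteq> conn (insert i S)"
    using s uv by (auto intro: conn_trans)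
qed

lemma conn_insert_same:
  assumes "e i = {u,v}" "(u,v) \<in> conn S"
  shows "conn (insert i S) = conn S"
proof -
  have "(a,b) \<in> conn S" if "(a,u) \<in> conn S \<and> (v,b) \<in> conn S \<or> (a,v) \<in> conn S \<and> (u,b) \<in> conn S" for a b
  proof -
    have vu: "(v,u) \<in> conn S" using assms(2) by (rule conn_sym)
    from that show ?thesis
    proof
      assume h: "(a,u) \<in> conn S \<and> (v,b) \<in> conn S"
      have "(a,v) \<in> conn S" using conn_trans[of a u S v] h assms(2) by blast
      then show ?thesis using h conn_trans[of a v S b] by blast
    next
      assume h: "(a,v) \<in> conn S \<and> (u,b) \<in> conn S"
      have "(a,u) \<in> conn S" using conn_trans[of a v S u] h vu by blast
      then show ?thesis using h conn_trans[of a u S b] by blast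
    qed
  qed
  then have "conn S \<union> {(a,b). (a,u) \<in> conn S \<and> (v,b) \<in> conn S \<or> (a,v) \<in> conn S \<and> (u,b) \<in> conn S} = conn S"
    by blast
  then show ?thesis using conn_insert[OF assms(1)] by simp
qed

lemma self_cls: "a \<in> V \<Longrightarrow> a \<in> cls S a" unfolding cls_def by simp

lemma cls_eq: "a \<in> V \<Longrightarrow> b \<in> V \<Longrightarrow> cls S a = cls S b \<longleftrightarrow> (a,b) \<in> conn S"
proof
  assume "a \<in> V" "b \<in> V" "cls S a = cls S b"
  then have "b \<in> cls S a" using self_cls by simp
  then show "(a,b) \<in> conn S" unfolding cls_def by simp
next
  assume ab: "(a,b) \<in> conn S"
  then have ba: "(b,a) \<in> conn S" by (rule conn_sym)
  have "(a,x) \<in> conn S \<longleftrightarrow> (b,x) \<in> conn S" for x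
    using conn_trans[OF ab, of x] conn_trans[OF ba, of x] by blast
  then show "cls S a = cls S b" unfolding cls_def by simp
qed

lemma comps_insert_same:
  assumes "e i = {u,v}" "(u,v) \<in> conn S"
  shows "comps (insert i S) = comps S"
  unfolding comps_def cls_def conn_insert_same[OF assms] ..

lemma comps_insert_new:
  assumes ei: "e i = {u,v}" and V: "u \<in> V" "v \<in> V" and nc: "(u,v) \<notin> conn S"
  shows "comps S = Suc (comps (insert i S))"
proof -
  let ?C = "cls S" and ?C' = "cls (insert i S)"
  have C'0: "?C' a = {b\<in>V. (a,b) \<in> conn S \<or> (a,u)\<in>conn S \<and> (v,b) \<in> conn S \<or> (a,v) \<in> conn S \<and> (u,b) \<in> conn S}" for a
    by (simp add: cls_def conn_insert[OF ei])
  have C': "?C' a = (if a \<in> ?C u \<union> ?C v then ?C u \<union> ?C v else ?C a)" if "a \<in> V" for a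
  proof (cases "a \<in> ?C u")
    case True
    then have au: "(a,u) \<in> conn S" and ua: "(u,a) \<in> conn S" unfolding cls_def using conn_sym by auto
    have eq: "(a,b) \<in> conn S \<longleftrightarrow> (u,b) \<in> conn S" for b using conn_trans[OF ua, of b] conn_trans[OF au, of b] by blast
    have eq2: "(a,v) \<in> conn S \<longleftrightarrow> (u,v) \<in> conn S" using eq by blast
    show ?thesis unfolding C'0 using True nc unfolding eq eq2 by (auto simp: cls_def)
  next
    case F: False
    show ?thesis
    proof (cases "a \<in> ?C v")
      case True
      then have au: "(a,v) \<in> conn S" and ua: "(v,a) \<in> conn S" unfolding cls_def using conn_sym by auto
      have eq: "(a,b) \<in> conn S \<longleftrightarrow> (v,b) \<in> conn S" for b using conn_trans[OF ua, of b] conn_trans[OF au, of b] by blast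
      have eq2: "(a,u) \<in> conn S \<longleftrightarrow> (v,u) \<in> conn S" using eq by blast
      have nc': "(v,u) \<notin> conn S" using nc conn_sym by blast
      show ?thesis unfolding C'0 using True nc' unfolding eq eq2 by (auto simp: cls_def)
    next
      case False
      have "(a,u) \<notin> conn S" "(a,v) \<notin> conn S" using F False that conn_sym unfolding cls_def by blast+
      then show ?thesis unfolding C'0 using F False by (auto simp: cls_def)
    qed
  qed
  have img: "?C' ` V = insert (?C u \<union> ?C v) (?C ` V - {?C u, ?C v})"
  proof
    show "?C' ` V \<subseteq> insert (?C u \<union> ?C v) (?C ` V - {?C u, ?C v})"
    proof
      fix X assume "X \<in> ?C' ` V"
      then obtain a where a: "a \<in> V" "X = ?C' a" by auto
      show "X \<in> insert (?C u \<union> ?C v) (?C ` V - {?C u, ?C v})"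
      proof (cases "a \<in> ?C u \<union> ?C v")
        case True then show ?thesis using C'[OF a(1)] a by simp
      next
        case False
        then have "?C a \<noteq> ?C u" "?C a \<noteq> ?C v" using self_cls[OF a(1), of S] by auto
        then show ?thesis using C'[OF a(1)] a False by auto
      qed
    qed
    show "insert (?C u \<union> ?C v) (?C ` V - {?C u, ?C v}) \<subseteq> ?C' ` V"
    proof
      fix X assume X: "X \<in> insert (?C u \<union> ?C v) (?C ` V - {?C u, ?C v})"
      show "X \<in> ?C' ` V"
      proof (cases "X = ?C u \<union> ?C v")
        case True
        have "u \<in> ?C u" using V unfolding cls_def by simp
        then have "?C' u = X" using C'[of u] V True by simp
        then show ?thesis using V by blast
      next
        case False
        then obtain a where a: "a \<in> V" "X = ?C a" "?C a \<noteq> ?C u" "?C a \<noteq> ?C v" using X by auto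
        have "a \<notin> ?C u" "a \<notin> ?C v" using a V cls_eq conn_sym unfolding cls_def
          by blast+
        then have "?C' a = X" using C'[OF a(1)] a by simp
        then show ?thesis using a by blast
      qed
    qed
  qed
  have ne: "?C u \<noteq> ?C v" using cls_eq V nc by blast
  have notin: "?C u \<union> ?C v \<notin> ?C ` V - {?C u, ?C v}"
  proof
    assume "?C u \<union> ?C v \<in> ?C ` V - {?C u, ?C v}"
    then obtain a where a: "a \<in> V" "?C a = ?C u \<union> ?C v" "?C a \<noteq> ?C u" by auto
    have "u \<in> ?C a" using a V unfolding cls_def by auto
    then have "(a,u) \<in> conn S" unfolding cls_def by auto
    then show False using a cls_eq V by blast
  qed
  have fin: "finite (?C ` V)" using finV by simp
  have "comps (insert i S) = Suc (card (?C ` V - {?C u, ?C v}))"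
    unfolding comps_def img using fin notin by simp
  also have "card (?C ` V - {?C u, ?C v}) = card (?C ` V) - 2"
    using fin ne V by (subst card_Diff_subset) auto
  finally have 1: "comps (insert i S) = Suc (card (?C ` V) - 2)" .
  have "card {?C u, ?C v} \<le> card (?C ` V)" using fin V by (intro card_mono) auto
  then have "2 \<le> card (?C ` V)" using ne by simp
  then show ?thesis using 1 unfolding comps_def by simp
qed

lemma comps_insert_le: "i < m \<Longrightarrow> comps (insert i S) \<le> comps S"
proof -
  assume "i < m"
  then obtain u v where uv: "e i = {u,v}" "u \<in> V" "v \<in> V" using edge by blast
  show ?thesis
  proof (cases "(u,v) \<in> conn S")
    case True then show ?thesis using comps_insert_same[OF uv(1)] by simp
  next
    case False then show ?thesis using comps_insert_new[OF uv False] by simp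
  qed
qed

lemma comps_empty: "comps {} = card V"
proof -
  have "adj e {} = {}" unfolding adj_def by simp
  then have "cls {} a = {a}" if "a \<in> V" for a using that unfolding cls_def conn_def by auto
  then have "cls {} ` V = (\<lambda>a. {a}) ` V" by auto
  then show ?thesis unfolding comps_def by (simp add: card_image)
qed

end


context sg begin

abbreviation acyc where "acyc S \<equiv> \<not> has_cycle e S"

lemma has_cycle_mono: "S \<subseteq> S' \<Longrightarrow> has_cycle e S \<Longrightarrow> has_cycle e S'"
  unfolding has_cycle_def using adj_mono by blast

lemma cycle_bridge:
  assumes "has_cycle e S"
  shows "\<exists>i\<in>S. \<exists>u v. e i = {u,v} \<and> (u,v) \<in> conn (S - {i})"
proof -
  obtain vs where L3: "length vs \<ge> 3" and d: "distinct vs"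
    and a: "\<forall>j<length vs. (vs!j, vs!((j+1) mod length vs)) \<in> adj e S"
    using assms unfolding has_cycle_def by blast
  define L where "L = length vs"
  have L: "L \<ge> 3" using L3 L_def by simp
  have a': "(vs!j, vs!((j+1) mod L)) \<in> adj e S" if "j < L" for j using a that L_def by simp
  have "(vs!0, vs!1) \<in> adj e S" using a'[of 0] L by simp
  then obtain i where i: "i \<in> S" "e i = {vs!0, vs!1}" unfolding adj_def by auto
  have step: "(vs!k, vs!((k+1) mod L)) \<in> adj e (S - {i})" if k: "1 \<le> k" "k < L" for k
  proof -
    obtain j where j: "j\<in>S" "e j = {vs!k, vs!((k+1) mod L)}" using a'[OF k(2)] unfolding adj_def by blast
    have "j \<noteq> i"
    proof
      assume "j = i"
      then have eq: "{vs!k, vs!((k+1) mod L)} = {vs!0, vs!1}" using i j by simp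
      have m: "(k+1) mod L < L" using L by simp
      have idx: "vs!p = vs!q \<longleftrightarrow> p = q" if "p < L" "q < L" for p q
        using nth_eq_iff_index_eq[OF d] that L_def by simp
      from eq have "vs!k = vs!0 \<or> vs!k = vs!1" by (auto simp: doubleton_eq_iff)
      then have "k = 1" using idx[of k 0] idx[of k 1] k L by auto
      with eq have "vs!((k+1) mod L) = vs!0" using idx[of 1 0] L by (auto simp: doubleton_eq_iff)
      then have "(k+1) mod L = 0" using idx[of "(k+1) mod L" 0] m L by simp
      with \<open>k = 1\<close> L show False by simp
    qed
    then show ?thesis using j unfolding adj_def by blast
  qed
  have path: "(vs!1, vs!k) \<in> conn (S - {i})" if "1 \<le> k" "k < L" for k
    using that
  proof (induction k)
    case 0 then show ?case by simp
  next
    case (Suc k)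
    show ?case
    proof (cases "k = 0")
      case True then show ?thesis by simp
    next
      case False
      then have IH: "(vs!1, vs!k) \<in> conn (S - {i})" using Suc by simp
      have "(vs!k, vs!((k+1) mod L)) \<in> adj e (S - {i})" using step[of k] False Suc by simp
      moreover have "(k+1) mod L = Suc k" using Suc by simp
      ultimately have "(vs!k, vs!(Suc k)) \<in> conn (S - {i})" using adj_in_conn by simp
      then show ?thesis using conn_trans[OF IH] by blast
    qed
  qed
  have "(vs!(L-1), vs!((L-1+1) mod L)) \<in> adj e (S - {i})" using step[of "L-1"] L by simp
  moreover have "(L-1+1) mod L = 0" using L by simp
  ultimately have "(vs!(L-1), vs!0) \<in> conn (S - {i})" using adj_in_conn by simp
  moreover have "(vs!1, vs!(L-1)) \<in> conn (S - {i})" using path[of "L-1"] L by simp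
  ultimately have "(vs!1, vs!0) \<in> conn (S - {i})" using conn_trans by blast
  then have "(vs!0, vs!1) \<in> conn (S - {i})" by (rule conn_sym)
  then show ?thesis using i by blast
qed

lemma bridge_cycle:
  assumes S: "S \<subseteq> {0..<m}" and i: "i \<in> S" and ei: "e i = {u,v}" and uv: "u \<noteq> v"
    and c: "(v,u) \<in> conn (S - {i})"
  shows "has_cycle e S"
proof -
  define r where "r = (\<lambda>a b. (a,b) \<in> adj e (S - {i}))"
  have "r\<^sup>*\<^sup>* v u" using c unfolding conn_def r_def
    by (simp add: rtranclp_rtrancl_eq)
  then obtain xs0 where "rtrancl_path r v xs0 u" using rtranclp_eq_rtrancl_path by metis
  then obtain xs where p: "rtrancl_path r v xs u" and d: "distinct (v # xs)"
    using rtrancl_path_distinct by metis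
  have ne: "xs \<noteq> []" using p uv by (auto elim: rtrancl_path.cases)
  have l2: "length xs \<ge> 2"
  proof (rule ccontr)
    assume "\<not> length xs \<ge> 2"
    with ne have "length xs = Suc 0" by (cases xs) (auto simp: not_le)
    then obtain y where xs: "xs = [y]" by (auto simp: length_Suc_conv)
    with p have "r v y" and "rtrancl_path r y [] u" by (auto elim: rtrancl_path.cases)
    then have "y = u" by (auto elim: rtrancl_path.cases)
    with \<open>r v y\<close> obtain j where j: "j \<in> S - {i}" "e j = {v,u}" unfolding r_def adj_def by auto
    have "e j = e i" using j ei by (auto simp: insert_commute)
    moreover have "j < m" "i < m" using j i S by auto
    ultimately have "j = i" using inj by blast
    with j show False by simp
  qed
  define vs where "vs = v # xs"
  have Lv: "length vs = Suc (length xs)" unfolding vs_def by simp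
  have lastu: "last xs = u" using rtrancl_path_last[OF p ne] .
  have "\<forall>j<length vs. (vs!j, vs!((j+1) mod length vs)) \<in> adj e S"
  proof (intro allI impI)
    fix j assume j: "j < length vs"
    show "(vs!j, vs!((j+1) mod length vs)) \<in> adj e S"
    proof (cases "j < length xs")
      case True
      have "r ((v # xs) ! j) (xs ! j)" using rtrancl_path_nth[OF p True] .
      moreover have "(j+1) mod length vs = Suc j" using True Lv by simp
      moreover have "vs ! Suc j = xs ! j" unfolding vs_def by simp
      ultimately have "(vs!j, vs!((j+1) mod length vs)) \<in> adj e (S - {i})"
        unfolding r_def vs_def by simp
      then show ?thesis using adj_mono[of "S - {i}" S] by blast
    next
      case False
      then have jj: "j = length xs" using j Lv by simp
      have "vs ! j = u" using jj lastu ne unfolding vs_def by (simp add: last_conv_nth)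
      moreover have "(j+1) mod length vs = 0" using jj Lv by simp
      moreover have "(u,v) \<in> adj e S" using i ei unfolding adj_def by blast
      ultimately show ?thesis unfolding vs_def by simp
    qed
  qed
  moreover have "length vs \<ge> 3" using l2 Lv by simp
  moreover have "distinct vs" using d vs_def by simp
  ultimately show ?thesis unfolding has_cycle_def by blast
qed

lemma nacyc_insert:
  assumes S: "S \<subseteq> {0..<m}" and i: "i < m" "i \<notin> S" and ei: "e i = {u,v}" and c: "(u,v) \<in> conn S"
  shows "has_cycle e (insert i S)"
proof -
  obtain a b where ab: "e i = {a,b}" "a \<noteq> b" using edge[OF i(1)] by blast
  have "u \<noteq> v" using ab ei by (metis doubleton_eq_iff)
  moreover have "insert i S - {i} = S" using i by auto
  ultimately show ?thesis using bridge_cycle[of "insert i S" i u v] S i ei conn_sym[OF c] by auto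
qed

lemma acyc_insert:
  assumes S: "S \<subseteq> {0..<m}" and i: "i < m" "i \<notin> S" and ei: "e i = {u,v}" and nc: "(u,v) \<notin> conn S"
    and ac: "acyc S"
  shows "acyc (insert i S)"
proof
  assume "has_cycle e (insert i S)"
  then obtain g a b where g: "g \<in> insert i S" "e g = {a,b}" and c: "(a,b) \<in> conn (insert i S - {g})"
    using cycle_bridge by blast
  show False
  proof (cases "g = i")
    case True
    then have "insert i S - {g} = S" using i by auto
    with c have "(a,b) \<in> conn S" by simp
    moreover have "{a,b} = {u,v}" using g ei True by simp
    ultimately have "(u,v) \<in> conn S" using conn_sym by (auto simp: doubleton_eq_iff)
    with nc show False by simp
  next
    case False
    then have gS: "g \<in> S" using g by simp
    have eq: "insert i S - {g} = insert i (S - {g})" using False by auto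
    have ab_nc: "(a,b) \<notin> conn (S - {g})"
    proof
      assume "(a,b) \<in> conn (S - {g})"
      moreover have "a \<noteq> b" using edge[of g] g gS S by (metis atLeastLessThan_iff doubleton_eq_iff subsetD)
      ultimately have "has_cycle e S" using bridge_cycle[OF S gS, of b a] g conn_sym by (auto simp: insert_commute)
      with ac show False by simp
    qed
    have "(a,b) \<in> adj e S" "(b,a) \<in> adj e S"
      unfolding adj_def using g(2) gS insert_commute[of a b "{}"] by blast+
    then have gab: "(a,b) \<in> conn S" "(b,a) \<in> conn S" using adj_in_conn by blast+
    have sub: "conn (S - {g}) \<subseteq> conn S" by (rule conn_mono) auto
    from c[unfolded eq conn_insert[OF ei]] ab_nc
    have "(a,u) \<in> conn (S - {g}) \<and> (v,b) \<in> conn (S - {g}) \<or> (a,v) \<in> conn (S - {g}) \<and> (u,b) \<in> conn (S - {g})"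
      by blast
    then have "(a,u) \<in> conn S \<and> (v,b) \<in> conn S \<or> (a,v) \<in> conn S \<and> (u,b) \<in> conn S"
      using sub by blast
    then show False
    proof
      assume h: "(a,u) \<in> conn S \<and> (v,b) \<in> conn S"
      have "(u,a) \<in> conn S" using h conn_sym by blast
      then have "(u,b) \<in> conn S" using conn_trans gab by blast
      then have "(u,v) \<in> conn S" using conn_trans conn_sym h by blast
      with nc show False by simp
    next
      assume h: "(a,v) \<in> conn S \<and> (u,b) \<in> conn S"
      have "(v,a) \<in> conn S" using h conn_sym by blast
      then have "(v,b) \<in> conn S" using conn_trans gab by blast
      then have "(u,v) \<in> conn S" using conn_trans conn_sym h by blast
      with nc show False by simp
    qed
  qed
qed

lemma acyc_empty: "acyc {}"
proof
  assume "has_cycle e {}"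
  then obtain vs where "length vs \<ge> 3" "(vs!0, vs!((0+1) mod length vs)) \<in> adj e {}"
    unfolding has_cycle_def by fastforce
  then show False unfolding adj_def by simp
qed

lemma F1:
  assumes "finite S" "S \<subseteq> {0..<m}"
  shows "card V \<le> comps S + card S \<and> (acyc S \<longleftrightarrow> comps S + card S = card V)"
  using assms
proof (induction S rule: finite_induct)
  case empty then show ?case using comps_empty acyc_empty by simp
next
  case (insert i S)
  have i: "i < m" and S: "S \<subseteq> {0..<m}" using insert by auto
  obtain u v where uv: "e i = {u,v}" "u \<noteq> v" "u \<in> V" "v \<in> V" using edge[OF i] by blast
  have cS: "card (insert i S) = Suc (card S)" using insert by simp
  show ?case
  proof (cases "(u,v) \<in> conn S")
    case True
    have "comps (insert i S) = comps S" using comps_insert_same[OF uv(1) True] .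
    moreover have "has_cycle e (insert i S)" using nacyc_insert[OF S i insert(2) uv(1) True] .
    ultimately show ?thesis using insert.IH[OF S] cS by simp
  next
    case False
    have "comps S = Suc (comps (insert i S))" using comps_insert_new[OF uv(1) uv(3) uv(4) False] .
    moreover have "acyc (insert i S) \<longleftrightarrow> acyc S"
      using acyc_insert[OF S i insert(2) uv(1) False] has_cycle_mono[of S "insert i S"] by blast
    ultimately show ?thesis using insert.IH[OF S] cS by simp
  qed
qed

end


context sg begin

lemma comps_pos: "V \<noteq> {} \<Longrightarrow> comps S \<ge> 1"
  unfolding comps_def using finV by (simp add: Suc_le_eq card_gt_0_iff)

lemma comps_conn:
  assumes "V \<noteq> {}"
  shows "connected_on V e S \<longleftrightarrow> comps S = 1"
proof
  assume c: "connected_on V e S"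
  have "cls S a = V" if "a \<in> V" for a
    using c that unfolding connected_on_def cls_def conn_def by auto
  then have "cls S ` V = {V}" using assms by auto
  then show "comps S = 1" unfolding comps_def by simp
next
  assume "comps S = 1"
  then obtain X where X: "cls S ` V = {X}" unfolding comps_def by (auto simp: card_Suc_eq)
  show "connected_on V e S" unfolding connected_on_def
  proof (intro ballI)
    fix a b assume ab: "a \<in> V" "b \<in> V"
    then have "cls S a = cls S b" using X by blast
    then have "(a,b) \<in> conn S" using cls_eq ab by blast
    then show "(a,b) \<in> (adj e S)\<^sup>*" unfolding conn_def .
  qed
qed

lemma comps_mono_union:
  assumes "finite F" "F \<subseteq> {0..<m}"
  shows "comps (S \<union> F) \<le> comps S"
  using assms
proof (induction F rule: finite_induct)
  case empty then show ?case by simp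
next
  case (insert i F)
  have "comps (insert i (S \<union> F)) \<le> comps (S \<union> F)" using comps_insert_le insert by auto
  then show ?case using insert by simp
qed

lemma comps_mono:
  assumes "S \<subseteq> S'" "S' \<subseteq> {0..<m}"
  shows "comps S' \<le> comps S"
proof -
  have "S' = S \<union> (S' - S)" using assms by auto
  moreover have "finite (S' - S)" using assms finite_subset by blast
  moreover have "S' - S \<subseteq> {0..<m}" using assms by auto
  ultimately show ?thesis using comps_mono_union[of "S' - S" S] by simp
qed

lemma tree_props:
  assumes "spanning_tree_edges V m e T" "V \<noteq> {}"
  shows "comps T = 1" "acyc T" "card T + 1 = card V" "T \<subseteq> {0..<m}" "finite T"
proof -
  show T: "T \<subseteq> {0..<m}" using assms unfolding spanning_tree_edges_def by simp
  show f: "finite T" using T finite_subset by blast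
  show c: "comps T = 1" using assms comps_conn unfolding spanning_tree_edges_def by simp
  show a: "acyc T" using assms unfolding spanning_tree_edges_def by simp
  show "card T + 1 = card V" using F1[OF f T] a c by simp
qed

lemma st_intro:
  assumes "T \<subseteq> {0..<m}" "comps T = 1" "card T + 1 = card V" "V \<noteq> {}"
  shows "spanning_tree_edges V m e T"
proof -
  have f: "finite T" using assms finite_subset by blast
  have "acyc T" using F1[OF f assms(1)] assms by simp
  then show ?thesis using assms comps_conn unfolding spanning_tree_edges_def by simp
qed

lemma augment:
  assumes A: "A \<subseteq> {0..<m}" and B: "B \<subseteq> {0..<m}" and aA: "acyc A" and aB: "acyc B"
    and lt: "card A < card B"
  shows "\<exists>c\<in>B - A. acyc (insert c A)"
proof (rule ccontr)
  assume na: "\<not> ?thesis"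
  have fA: "finite A" and fB: "finite B" using A B finite_subset by blast+
  have conn_c: "\<exists>u v. e c = {u,v} \<and> (u,v) \<in> conn A" if "c \<in> B - A" for c
  proof -
    have cm: "c < m" "c \<notin> A" using that B by auto
    obtain u v where uv: "e c = {u,v}" using edge[OF cm(1)] by blast
    have "(u,v) \<in> conn A"
    proof (rule ccontr)
      assume nc: "(u,v) \<notin> conn A"
      have "acyc (insert c A)" by (rule acyc_insert[OF A cm uv nc aA])
      with na that show False by blast
    qed
    then show ?thesis using uv by blast
  qed
  have keep: "comps (A \<union> F) = comps A" if "F \<subseteq> B - A" for F
  proof -
    have "finite F" using that fB finite_subset by blast
    then show ?thesis using that
    proof (induction F rule: finite_induct)
      case empty then show ?case by simp
    next
      case (insert c F)
      have cBA: "c \<in> B - A" using insert.prems by simp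
      obtain u v where uv: "e c = {u,v}" "(u,v) \<in> conn A" using conn_c[OF cBA] by blast
      have sub: "conn A \<subseteq> conn (A \<union> F)" by (rule conn_mono) simp
      have "(u,v) \<in> conn (A \<union> F)" using uv(2) sub by (rule subsetD[rotated])
      then have "comps (insert c (A \<union> F)) = comps (A \<union> F)" by (rule comps_insert_same[OF uv(1)])
      moreover have "comps (A \<union> F) = comps A" using insert.IH insert.prems by simp
      ultimately show ?case by simp
    qed
  qed
  have "A \<union> B = A \<union> (B - A)" by auto
  then have "comps (A \<union> B) = comps A" using keep[of "B - A"] by simp
  moreover have "A \<union> B \<subseteq> {0..<m}" using A B by (rule Un_least)
  then have "comps (A \<union> B) \<le> comps B" using comps_mono[of B "A \<union> B"] by simp
  moreover have "comps A + card A = card V" using F1[OF fA A] aA by simp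
  moreover have "comps B + card B = card V" using F1[OF fB B] aB by simp
  ultimately show False using lt by linarith
qed

lemma augment_many:
  assumes A: "A \<subseteq> {0..<m}" and B: "B \<subseteq> {0..<m}" and aA: "acyc A" and aB: "acyc B"
  shows "\<exists>C \<subseteq> B - A. card C = card B - card A \<and> acyc (A \<union> C)"
proof -
  have "\<exists>C \<subseteq> B - A. card C = k \<and> acyc (A \<union> C)" if "k \<le> card B - card A" for k
    using that
  proof (induction k)
    case 0 then show ?case using aA by (intro exI[of _ "{}"]) auto
  next
    case (Suc k)
    then obtain C where C: "C \<subseteq> B - A" "card C = k" "acyc (A \<union> C)" by auto
    have CB: "C \<subseteq> {0..<m}" using C B by auto
    have fin: "finite A" "finite C" using finite_subset[OF A] finite_subset[OF CB] by auto
    have "card (A \<union> C) = card A + k" 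
    proof -
      have "A \<inter> C = {}" using C(1) by blast
      then show ?thesis using card_Un_disjoint[OF fin] C(2) by simp
    qed
    then have "card (A \<union> C) < card B" using Suc by simp
    moreover have "A \<union> C \<subseteq> {0..<m}" using A B C by auto
    ultimately obtain c where c: "c \<in> B - (A \<union> C)" "acyc (insert c (A \<union> C))"
      using augment[OF _ B C(3) aB] by blast
    show ?case
    proof (intro exI[of _ "insert c C"] conjI)
      show "insert c C \<subseteq> B - A" using c C by auto
      show "card (insert c C) = Suc k" using c C fin by simp
      show "acyc (A \<union> insert c C)" using c by simp
    qed
  qed
  then show ?thesis by blast
qed

lemma exchange:
  assumes T: "spanning_tree_edges V m e T" and V: "V \<noteq> {}" and A: "A \<subseteq> T"
    and c: "c < m" "c \<notin> T" and ac: "acyc (insert c A)"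
  shows "\<exists>g\<in>T - A. spanning_tree_edges V m e (insert c T - {g})"
proof -
  note tp = tree_props[OF T V]
  define X where "X = insert c T"
  define H where "H = T - A"
  have X: "X \<subseteq> {0..<m}" using tp c unfolding X_def by auto
  have cX: "comps X = 1"
  proof -
    have "comps X \<le> comps T" using comps_mono[of T X] X unfolding X_def by auto
    then show ?thesis using tp comps_pos[OF V, of X] by simp
  qed
  have ex: "\<exists>g\<in>H. \<exists>a b. e g = {a,b} \<and> (a,b) \<in> conn (X - {g})"
  proof (rule ccontr)
    assume nb: "\<not> ?thesis"
    have fH: "finite H" using tp H_def by simp
    have "comps (X - F) = 1 + card F" if "F \<subseteq> H" for F
    proof -
      have "finite F" using that fH finite_subset by blast
      then show ?thesis using that
      proof (induction F rule: finite_induct)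
        case empty then show ?case using cX by simp
      next
        case (insert h F)
        have hH: "h \<in> H" using insert by simp
        then have hm: "h < m" using tp H_def by auto
        obtain a b where ab: "e h = {a,b}" "a \<in> V" "b \<in> V" using edge[OF hm] by blast
        have "(a,b) \<notin> conn (X - {h})" using nb hH ab by blast
        moreover have "conn ((X - F) - {h}) \<subseteq> conn (X - {h})" by (rule conn_mono) auto
        ultimately have nc: "(a,b) \<notin> conn ((X - F) - {h})" by blast
        have hX: "h \<in> X - F" using hH insert H_def X_def by auto
        have "insert h ((X - F) - {h}) = X - F" using hX by auto
        then have "comps ((X - F) - {h}) = Suc (comps (X - F))"
          using comps_insert_new[OF ab(1) ab(2) ab(3) nc] by simp
        moreover have "X - insert h F = (X - F) - {h}" by auto
        ultimately show ?case using insert by simp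
      qed
    qed
    then have c1: "comps (X - H) = 1 + card H" by simp
    have XH: "X - H = insert c A" using A c unfolding X_def H_def by auto
    have cA: "c \<notin> A" using A c by auto
    have fA: "finite A" using tp A finite_subset by blast
    have cardH: "card H = card T - card A" using A tp unfolding H_def by (simp add: card_Diff_subset fA)
    have cardA: "card A \<le> card T" using A tp card_mono by blast
    have sub: "insert c A \<subseteq> {0..<m}" using A tp c by auto
    have "comps (insert c A) + card (insert c A) = card V"
      using F1[OF _ sub] ac fA by simp
    then show False using c1 XH cardH cardA cA fA tp(3) by simp
  qed
  then obtain g a b where g: "g \<in> H" "e g = {a,b}" "(a,b) \<in> conn (X - {g})" by blast
  have gX: "g \<in> X" using g H_def X_def by auto
  have "insert g (X - {g}) = X" using gX by auto
  then have c2: "comps (X - {g}) = 1" using comps_insert_same[OF g(2) g(3)] cX by simp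
  have "card (X - {g}) = card T" using gX c tp unfolding X_def by simp
  then have "spanning_tree_edges V m e (X - {g})" using st_intro[OF _ c2 _ V] X tp by auto
  then show ?thesis using g unfolding H_def X_def by blast
qed

end



definition swap :: "(nat \<Rightarrow> bool) \<Rightarrow> nat \<Rightarrow> nat \<Rightarrow> nat \<Rightarrow> bool" where
  "swap x f c = (\<lambda>i. x i \<noteq> (i = f \<or> i = c))"

context sg begin

definition pairs :: "(nat \<Rightarrow> nat) \<Rightarrow> (nat \<Rightarrow> bool) \<Rightarrow> (nat \<times> nat) set" where
  "pairs w x = {(f,c). f < m \<and> c < m \<and> x f \<and> \<not> x c \<and> is_st V m e (swap x f c) \<and> w c \<le> w f}"

lemma pairs_finite: "finite (pairs w x)"
proof -
  have "pairs w x \<subseteq> {..<m} \<times> {..<m}" unfolding pairs_def by auto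
  then show ?thesis by (rule finite_subset) simp
qed

lemma edges_swap:
  assumes "f < m" "c < m" "x f" "\<not> x c"
  shows "edges_of m (swap x f c) = insert c (edges_of m x) - {f}"
  using assms unfolding edges_of_def swap_def by auto

lemma weight_edges: "weight m w x = (\<Sum>i\<in>edges_of m x. w i)"
proof -
  have "weight m w x = (\<Sum>i\<in>{..<m}. if x i then w i else 0)"
    unfolding weight_def by (intro sum.cong) auto
  also have "\<dots> = (\<Sum>i\<in>{i\<in>{..<m}. x i}. w i)"
    by (rule sum.inter_filter[symmetric]) simp
  also have "{i\<in>{..<m}. x i} = edges_of m x" unfolding edges_of_def by auto
  finally show ?thesis .
qed

lemma layer:
  assumes fin: "finite T" and bd: "\<forall>i\<in>T. w i \<le> W"
  shows "(\<Sum>i\<in>T. w i) = (\<Sum>t<W. card {i\<in>T. t < w i})"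
proof -
  have "(\<Sum>i\<in>T. w i) = (\<Sum>i\<in>T. \<Sum>t<W. if t < w i then 1 else 0)"
  proof (intro sum.cong refl)
    fix i assume "i \<in> T"
    then have "{t\<in>{..<W}. t < w i} = {..<w i}" using bd by auto
    then have "card {t\<in>{..<W}. t < w i} = w i" by simp
    moreover have "card {t\<in>{..<W}. t < w i} = (\<Sum>t<W. if t < w i then 1 else 0)"
      by (simp add: sum.inter_filter[symmetric])
    ultimately show "w i = (\<Sum>t<W. if t < w i then 1 else 0)" by simp
  qed
  also have "\<dots> = (\<Sum>t<W. \<Sum>i\<in>T. if t < w i then 1 else 0)" by (rule sum.swap)
  also have "\<dots> = (\<Sum>t<W. card {i\<in>T. t < w i})"
    using fin by (simp add: sum.inter_filter[symmetric])
  finally show ?thesis .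
qed

lemma level:
  assumes V: "V \<noteq> {}" and x: "is_st V m e x" and y: "is_st V m e y"
  shows "int (card {i\<in>edges_of m y. w i \<le> t}) - int (card {i\<in>edges_of m x. w i \<le> t})
         \<le> int (card {p\<in>pairs w x. w (snd p) \<le> t \<and> t < w (fst p)})"
proof -
  define T where "T = edges_of m x"
  define A where "A = {i\<in>T. w i \<le> t}"
  define B where "B = {i\<in>edges_of m y. w i \<le> t}"
  define N where "N = {p\<in>pairs w x. w (snd p) \<le> t \<and> t < w (fst p)}"
  have Tst: "spanning_tree_edges V m e T" using x unfolding is_st_def T_def .
  have Yst: "spanning_tree_edges V m e (edges_of m y)" using y unfolding is_st_def .
  note tT = tree_props[OF Tst V] and tY = tree_props[OF Yst V]
  have AT: "A \<subseteq> T" unfolding A_def by auto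
  have A: "A \<subseteq> {0..<m}" using AT tT by auto
  have B: "B \<subseteq> {0..<m}" using tY unfolding B_def by auto
  have aA: "acyc A" using tT(2) has_cycle_mono[OF AT] by blast
  have aB: "acyc B" using tY(2) has_cycle_mono[of B "edges_of m y"] unfolding B_def by blast
  obtain C where C: "C \<subseteq> B - A" "card C = card B - card A" "acyc (A \<union> C)"
    using augment_many[OF A B aA aB] by blast
  have g_ex: "\<exists>g. (g, c) \<in> N" if cC: "c \<in> C" for c
  proof -
    have cB: "c \<in> B" "c \<notin> A" using C cC by auto
    have cm: "c < m" using cB B by auto
    have wc: "w c \<le> t" using cB unfolding B_def by simp
    have cT: "c \<notin> T" using cB wc unfolding A_def by auto
    have "acyc (insert c A)" using C(3) has_cycle_mono[of "insert c A" "A \<union> C"] cC by blast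
    then obtain g where g: "g \<in> T - A" "spanning_tree_edges V m e (insert c T - {g})"
      using exchange[OF Tst V AT cm cT] by blast
    have gm: "g < m" "x g" using g(1) unfolding T_def edges_of_def by auto
    have xc: "\<not> x c" using cT cm unfolding T_def edges_of_def by auto
    have wg: "t < w g" using g(1) unfolding A_def by auto
    have "is_st V m e (swap x g c)"
      unfolding is_st_def edges_swap[OF gm(1) cm gm(2) xc] using g(2) T_def by simp
    then have "(g,c) \<in> N" unfolding N_def pairs_def using gm cm xc wc wg by auto
    then show ?thesis by blast
  qed
  define G where "G c = (SOME g. (g,c) \<in> N)" for c
  have GN: "(G c, c) \<in> N" if "c \<in> C" for c using someI_ex[OF g_ex[OF that]] unfolding G_def .
  have "inj_on (\<lambda>c. (G c, c)) C" by (rule inj_onI) simp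
  moreover have "(\<lambda>c. (G c, c)) ` C \<subseteq> N" using GN by blast
  moreover have "finite N" unfolding N_def using pairs_finite by simp
  ultimately have "card C \<le> card N" by (metis card_inj_on_le)
  then show ?thesis using C(2) unfolding N_def[symmetric] A_def[symmetric] B_def[symmetric] T_def[symmetric]
    by linarith
qed

lemma comb:
  assumes V: "V \<noteq> {}" and x: "is_st V m e x" and y: "is_st V m e y"
  shows "int (weight m w x) - int (weight m w y) \<le> (\<Sum>p\<in>pairs w x. int (w (fst p)) - int (w (snd p)))"
proof -
  define W where "W = (\<Sum>i<m. w i)"
  have bdW: "w i \<le> W" if "i < m" for i
    unfolding W_def using that by (intro member_le_sum) auto
  define T where "T = edges_of m x"
  define Y where "Y = edges_of m y"
  have Tst: "spanning_tree_edges V m e T" using x unfolding is_st_def T_def .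
  have Yst: "spanning_tree_edges V m e Y" using y unfolding is_st_def Y_def .
  note tT = tree_props[OF Tst V] and tY = tree_props[OF Yst V]
  have cTY: "card T = card Y" using tT(3) tY(3) by simp
  have split: "card {i\<in>S. t < w i} = card S - card {i\<in>S. w i \<le> t}" "card {i\<in>S. w i \<le> t} \<le> card S"
    if "finite S" for S t
  proof -
    have "{i\<in>S. t < w i} = S - {i\<in>S. w i \<le> t}" by auto
    then show "card {i\<in>S. t < w i} = card S - card {i\<in>S. w i \<le> t}"
      using that by (simp add: card_Diff_subset)
    show "card {i\<in>S. w i \<le> t} \<le> card S" using that by (intro card_mono) auto
  qed
  have wx: "weight m w x = (\<Sum>t<W. card {i\<in>T. t < w i})"
    unfolding weight_edges T_def[symmetric] using tT bdW by (intro layer) auto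
  have wy: "weight m w y = (\<Sum>t<W. card {i\<in>Y. t < w i})"
    unfolding weight_edges Y_def[symmetric] using tY bdW by (intro layer) auto
  have "int (weight m w x) - int (weight m w y)
      = (\<Sum>t<W. int (card {i\<in>Y. w i \<le> t}) - int (card {i\<in>T. w i \<le> t}))"
    unfolding wx wy of_nat_sum sum_subtractf[symmetric]
  proof (intro sum.cong refl)
    fix t
    show "int (card {i\<in>T. t < w i}) - int (card {i\<in>Y. t < w i})
        = int (card {i\<in>Y. w i \<le> t}) - int (card {i\<in>T. w i \<le> t})"
      using split[OF tT(5), of t] split[OF tY(5), of t] cTY by simp
  qed
  also have "\<dots> \<le> (\<Sum>t<W. int (card {p\<in>pairs w x. w (snd p) \<le> t \<and> t < w (fst p)}))"
    by (intro sum_mono) (use level[OF V x y] in \<open>simp add: T_def Y_def\<close>)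
  also have "\<dots> = (\<Sum>t<W. \<Sum>p\<in>pairs w x. if w (snd p) \<le> t \<and> t < w (fst p) then 1 else 0)"
    using pairs_finite by (simp add: sum.inter_filter[symmetric])
  also have "\<dots> = (\<Sum>p\<in>pairs w x. \<Sum>t<W. if w (snd p) \<le> t \<and> t < w (fst p) then 1 else 0)"
    by (rule sum.swap)
  also have "\<dots> = (\<Sum>p\<in>pairs w x. int (w (fst p)) - int (w (snd p)))"
  proof (intro sum.cong refl)
    fix p assume p: "p \<in> pairs w x"
    obtain f c where pf: "p = (f,c)" by (cases p)
    have fc: "f < m" "w c \<le> w f" using p pf unfolding pairs_def by auto
    have "{t\<in>{..<W}. w c \<le> t \<and> t < w f} = {w c..<w f}" using bdW[OF fc(1)] by auto
    then have "(\<Sum>t<W. if w c \<le> t \<and> t < w f then 1 else 0) = int (card {w c..<w f})"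
      by (simp add: sum.inter_filter[symmetric])
    also have "\<dots> = int (w f) - int (w c)" using fc by simp
    finally show "(\<Sum>t<W. if w (snd p) \<le> t \<and> t < w (fst p) then 1 else 0) = int (w (fst p)) - int (w (snd p))"
      using pf by simp
  qed
  finally show ?thesis .
qed

end



locale ea = sg +
  fixes w :: "nat \<Rightarrow> nat" and x0 :: "nat \<Rightarrow> bool"
  assumes m1: "m \<ge> 1" and x0m: "\<forall>i\<ge>m. \<not> x0 i" and x0st: "is_st V m e x0"
begin

definition "Bm = {x::nat\<Rightarrow>bool. \<forall>i\<ge>m. \<not> x i}"
definition "Q = Pi_pmf {0..<m} False (\<lambda>_. bernoulli_pmf (1 / real m))"
definition "res x fl = (let y = (\<lambda>i. x i \<noteq> fl i) in
   if is_st V m e y \<and> weight m w y \<le> weight m w x then y else x)"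
definition "wopt = (LEAST k. \<exists>y. is_st V m e y \<and> weight m w y = k)"
definition "Dr x = real (weight m w x) - real wopt"
definition "EE p f = (\<Sum>a\<in>Bm. f a * pmf p a)"
definition "ind f c = (\<lambda>i. i = f \<or> i = c)"
definition "\<delta> = 1 / (exp 1 * real m ^ 2)"

lemma finBm: "finite Bm"
proof -
  have "Bm \<subseteq> (\<lambda>S i. i \<in> S) ` Pow {..<m}"
  proof
    fix x assume "x \<in> Bm"
    then have "x = (\<lambda>i. i \<in> {i. i < m \<and> x i})" unfolding Bm_def by (auto simp: fun_eq_iff) (meson not_less)
    then show "x \<in> (\<lambda>S i. i \<in> S) ` Pow {..<m}" by blast
  qed
  then show ?thesis by (rule finite_subset) simp
qed

lemma setQ: "set_pmf Q \<subseteq> Bm"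
proof
  fix x assume "x \<in> set_pmf Q"
  then have "x \<in> {f. \<forall>i. i \<notin> {0..<m} \<longrightarrow> f i = False}"
    unfolding Q_def using set_Pi_pmf_subset[of "{0..<m}" False] by blast
  then show "x \<in> Bm" unfolding Bm_def by auto
qed

lemma Vne: "V \<noteq> {}" using edge[of 0] m1 by auto

lemma step_eq: "ea_step V m e w x = map_pmf (res x) Q"
  unfolding ea_step_def res_def Q_def ..

lemma wopt_ex: "\<exists>y. is_st V m e y \<and> weight m w y = wopt"
  unfolding wopt_def by (rule LeastI_ex) (use x0st in blast)

lemma wopt_le: "is_st V m e y \<Longrightarrow> wopt \<le> weight m w y"
  unfolding wopt_def by (rule Least_le) blast

lemma mst_iff: "is_st V m e x \<Longrightarrow> is_mst V m e w x \<longleftrightarrow> weight m w x = wopt"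
proof
  assume "is_st V m e x" "is_mst V m e w x"
  moreover obtain y where "is_st V m e y" "weight m w y = wopt" using wopt_ex by blast
  ultimately show "weight m w x = wopt" using wopt_le[of x] unfolding is_mst_def by fastforce
next
  assume "is_st V m e x" "weight m w x = wopt"
  then show "is_mst V m e w x" unfolding is_mst_def using wopt_le by simp
qed

lemma Dr_nonneg: "is_st V m e x \<Longrightarrow> 0 \<le> Dr x"
  unfolding Dr_def using wopt_le by simp

lemma res_inv:
  assumes "x \<in> Bm" "fl \<in> Bm"
  shows "res x fl \<in> Bm" "is_st V m e x \<Longrightarrow> is_st V m e (res x fl)" "weight m w (res x fl) \<le> weight m w x"
  using assms unfolding res_def Bm_def Let_def by auto

lemma weight_swap:
  assumes "(f,c) \<in> pairs w x"
  shows "real (weight m w (swap x f c)) = real (weight m w x) - real (w f) + real (w c)"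
proof -
  have fc: "f < m" "c < m" "x f" "\<not> x c" using assms unfolding pairs_def by auto
  define T where "T = edges_of m x"
  have fT: "f \<in> T" "c \<notin> T" using fc unfolding T_def edges_of_def by auto
  have finT: "finite T" unfolding T_def edges_of_def by simp
  have "weight m w (swap x f c) = (\<Sum>i\<in>insert c T - {f}. w i)"
    unfolding weight_edges edges_swap[OF fc] T_def ..
  moreover have "(\<Sum>i\<in>insert c T. w i) = w f + (\<Sum>i\<in>insert c T - {f}. w i)"
    using fT finT by (intro sum.remove) auto
  moreover have "(\<Sum>i\<in>insert c T. w i) = w c + (\<Sum>i\<in>T. w i)"
    using fT finT by simp
  moreover have "weight m w x = (\<Sum>i\<in>T. w i)" unfolding weight_edges T_def ..
  ultimately have "weight m w (swap x f c) + w f = weight m w x + w c" by linarith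
  then have "real (weight m w (swap x f c) + w f) = real (weight m w x + w c)" by (rule arg_cong)
  then show ?thesis by simp
qed

lemma res_ind:
  assumes "(f,c) \<in> pairs w x"
  shows "res x (ind f c) = swap x f c"
proof -
  have st: "is_st V m e (swap x f c)" and le: "w c \<le> w f" using assms unfolding pairs_def by auto
  have "weight m w (swap x f c) \<le> weight m w x" using weight_swap[OF assms] le by simp
  moreover have "(\<lambda>i. x i \<noteq> ind f c i) = swap x f c" unfolding ind_def swap_def ..
  ultimately show ?thesis unfolding res_def Let_def using st by simp
qed

lemma ind_inj:
  assumes "p \<in> pairs w x" "q \<in> pairs w x" "ind (fst p) (snd p) = ind (fst q) (snd q)"
  shows "p = q"
proof -
  obtain f c f' c' where pq: "p = (f,c)" "q = (f',c')" by (cases p, cases q)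
  have x: "x f" "\<not> x c" "x f'" "\<not> x c'" using assms pq unfolding pairs_def by auto
  have h: "ind f c = ind f' c'" using assms(3) pq by simp
  have eq: "(i = f \<or> i = c) = (i = f' \<or> i = c')" for i using fun_cong[OF h, of i] unfolding ind_def by simp
  have "f = f'" using eq[of f] eq[of f'] x by auto
  moreover have "c = c'" using eq[of c] eq[of c'] x by auto
  ultimately show ?thesis using pq by simp
qed

lemma ind_Bm: "f < m \<Longrightarrow> c < m \<Longrightarrow> ind f c \<in> Bm"
  unfolding ind_def Bm_def by auto

lemma exp_bound:
  assumes "m \<ge> 2"
  shows "exp (-1) \<le> (1 - 1 / real m) ^ (m - 2)"
proof -
  define k where "k = m - 1"
  have k: "k \<ge> 1" "real m = real k + 1" using assms unfolding k_def by auto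
  have "(1 + 1 / real k) ^ k \<le> exp (1 / real k) ^ k"
    by (intro power_mono) (use exp_ge_add_one_self[of "1 / real k"] in \<open>auto simp: add.commute\<close>)
  also have "exp (1 / real k) ^ k = exp 1"
    using k by (simp add: exp_of_nat_mult[symmetric])
  finally have a: "(1 + 1 / real k) ^ k \<le> exp 1" .
  have kp: "real k > 0" using k by simp
  have e1: "1 - 1 / real m = real k / real m" using k by (simp add: field_simps)
  have e2: "1 + 1 / real k = real m / real k" using kp k by (simp add: field_simps)
  have prod1: "(1 - 1 / real m) * (1 + 1 / real k) = 1" unfolding e1 e2 using kp k by simp
  have "(1 - 1 / real m) ^ k * (1 + 1 / real k) ^ k = 1"
    using prod1 by (simp add: power_mult_distrib[symmetric])
  have p1: "0 < 1 + 1 / real k" using kp by (intro add_pos_pos) auto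
  then have pos0: "(1 + 1 / real k) ^ k \<noteq> 0" by simp
  then have b: "(1 - 1 / real m) ^ k = 1 / (1 + 1 / real k) ^ k"
    using \<open>(1 - 1 / real m) ^ k * (1 + 1 / real k) ^ k = 1\<close> p1 by (simp add: eq_divide_eq)
  have pos: "0 < (1 + 1 / real k) ^ k" using p1 by simp
  have "exp (-1::real) = 1 / exp 1" by (simp add: exp_minus inverse_eq_divide)
  also have "\<dots> \<le> 1 / (1 + 1 / real k) ^ k" using a pos by (intro divide_left_mono) auto
  also have "\<dots> = (1 - 1 / real m) ^ k" using b by simp
  also have "\<dots> \<le> (1 - 1 / real m) ^ (m - 2)"
    using k assms unfolding k_def by (intro power_decreasing) auto
  finally show ?thesis .
qed

lemma pmfQ:
  assumes "(f,c) \<in> pairs w x"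
  shows "\<delta> \<le> pmf Q (ind f c)"
proof -
  have fc: "f < m" "c < m" "f \<noteq> c" using assms unfolding pairs_def by auto
  have m2: "m \<ge> 2" using fc by linarith
  have p: "0 \<le> 1 / real m" "1 / real m \<le> (1::real)" using m1 by auto
  have "pmf Q (ind f c) = (\<Prod>i\<in>{0..<m}. pmf (bernoulli_pmf (1 / real m)) (ind f c i))"
    unfolding Q_def using fc by (subst pmf_Pi) (auto simp: ind_def)
  also have "\<dots> = (\<Prod>i\<in>{0..<m}. if i \<in> {f,c} then 1 / real m else 1 - 1 / real m)"
    using p by (intro prod.cong refl) (auto simp: ind_def)
  also have "\<dots> = (\<Prod>i\<in>{0..<m} \<inter> {i. i \<in> {f,c}}. 1 / real m) * (\<Prod>i\<in>{0..<m} \<inter> - {i. i \<in> {f,c}}. 1 - 1 / real m)"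
    by (rule prod.If_cases) simp
  also have "(\<Prod>i\<in>{0..<m} \<inter> {i. i \<in> {f,c}}. 1 / real m) = (1 / real m) ^ 2"
  proof -
    have "{0..<m} \<inter> {i. i \<in> {f,c}} = {f,c}" using fc by auto
    then show ?thesis using fc by (simp add: power2_eq_square)
  qed
  also have "(\<Prod>i\<in>{0..<m} \<inter> - {i. i \<in> {f,c}}. 1 - 1 / real m) = (1 - 1 / real m) ^ (m - 2)"
  proof -
    have "{0..<m} \<inter> - {i. i \<in> {f,c}} = {0..<m} - {f,c}" by auto
    then have "card ({0..<m} \<inter> - {i. i \<in> {f,c}}) = m - 2" using fc by (simp add: card_Diff_subset)
    then show ?thesis by simp
  qed
  finally have eq: "pmf Q (ind f c) = (1 / real m) ^ 2 * (1 - 1 / real m) ^ (m - 2)" .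
  have "\<delta> = (1 / real m) ^ 2 * exp (-1)" unfolding \<delta>_def by (simp add: exp_minus field_simps power2_eq_square)
  also have "\<dots> \<le> (1 / real m) ^ 2 * (1 - 1 / real m) ^ (m - 2)"
    by (intro mult_left_mono exp_bound m2) simp
  finally show ?thesis unfolding eq .
qed

end


context ea begin

lemma EE_integral: "set_pmf p \<subseteq> Bm \<Longrightarrow> EE p f = measure_pmf.expectation p f"
  unfolding EE_def by (rule integral_measure_pmf_real[symmetric]) (use finBm in auto)

lemma EE_map:
  assumes "set_pmf p \<subseteq> Bm" "g ` set_pmf p \<subseteq> Bm"
  shows "EE (map_pmf g p) f = EE p (\<lambda>x. f (g x))"
proof -
  have "set_pmf (map_pmf g p) \<subseteq> Bm" using assms by simp
  then show ?thesis using assms by (simp add: EE_integral)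
qed

lemma EE_bind:
  assumes "set_pmf M \<subseteq> Bm"
  shows "EE (bind_pmf M N) f = EE M (\<lambda>x. EE (N x) f)"
proof -
  have "EE (bind_pmf M N) f = (\<Sum>a\<in>Bm. f a * EE M (\<lambda>x. pmf (N x) a))"
    unfolding EE_def[of "bind_pmf M N"] pmf_bind EE_integral[OF assms] ..
  also have "\<dots> = (\<Sum>a\<in>Bm. \<Sum>x\<in>Bm. f a * (pmf (N x) a * pmf M x))"
    unfolding EE_def by (simp add: sum_distrib_left)
  also have "\<dots> = (\<Sum>x\<in>Bm. \<Sum>a\<in>Bm. f a * (pmf (N x) a * pmf M x))"
    by (rule sum.swap)
  also have "\<dots> = EE M (\<lambda>x. EE (N x) f)"
    unfolding EE_def by (simp add: sum_distrib_right mult.assoc)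
  finally show ?thesis .
qed

lemma EE_const:
  assumes "set_pmf p \<subseteq> Bm"
  shows "EE p (\<lambda>_. k) = k"
  unfolding EE_def using sum_pmf_eq_1[OF finBm assms] by (simp add: sum_distrib_left[symmetric])

lemma EE_mono:
  assumes "\<And>x. x \<in> set_pmf p \<Longrightarrow> f x \<le> g x"
  shows "EE p f \<le> EE p g"
  unfolding EE_def
proof (rule sum_mono)
  fix a
  show "f a * pmf p a \<le> g a * pmf p a"
  proof (cases "a \<in> set_pmf p")
    case True then show ?thesis using assms by (intro mult_right_mono) auto
  next
    case False then have "pmf p a = 0" by (simp add: set_pmf_eq)
    then show ?thesis by simp
  qed
qed

lemma EE_cmult: "EE p (\<lambda>x. c * f x) = c * EE p f"
  unfolding EE_def by (simp add: sum_distrib_left mult.assoc)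

lemma EE_diff: "EE p (\<lambda>x. f x - g x) = EE p f - EE p g"
  unfolding EE_def by (simp add: left_diff_distrib sum_subtractf)

lemma EE_sum: "finite P \<Longrightarrow> EE p (\<lambda>x. \<Sum>q\<in>P. g q x) = (\<Sum>q\<in>P. EE p (g q))"
  unfolding EE_def by (simp add: sum_distrib_right) (rule sum.swap)

lemma EE_point: "a \<in> Bm \<Longrightarrow> EE p (\<lambda>x. if x = a then k else 0) = k * pmf p a"
proof -
  assume a: "a \<in> Bm"
  have "EE p (\<lambda>x. if x = a then k else 0) = (\<Sum>x\<in>Bm. if x = a then k * pmf p a else 0)"
    unfolding EE_def by (intro sum.cong) auto
  also have "\<dots> = k * pmf p a" using finBm a by simp
  finally show ?thesis .
qed

lemma delta_pos: "0 < \<delta>" "\<delta> \<le> 1"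
proof -
  show "0 < \<delta>" unfolding \<delta>_def using m1 by simp
  have "1 \<le> exp (1::real)" by simp
  moreover have "1 \<le> real m ^ 2" using m1 by simp
  ultimately have "1 \<le> exp 1 * real m ^ 2" using mult_mono[of 1 "exp 1" 1 "real m ^ 2"] by simp
  then show "\<delta> \<le> 1" unfolding \<delta>_def by simp
qed

lemma drift:
  assumes xB: "x \<in> Bm" and xst: "is_st V m e x"
  shows "EE (ea_step V m e w x) Dr \<le> (1 - \<delta>) * Dr x"
proof -
  define P where "P = pairs w x"
  define a where "a p = real (w (fst p)) - real (w (snd p))" for p
  define g where "g p fl = (if fl = ind (fst p) (snd p) then a p else 0)" for p fl
  have finP: "finite P" unfolding P_def by (rule pairs_finite)
  have a_nn: "0 \<le> a p" if "p \<in> P" for p using that unfolding a_def P_def pairs_def by auto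
  have supp: "res x ` set_pmf Q \<subseteq> Bm" using res_inv(1)[OF xB] setQ by blast
  have "EE (ea_step V m e w x) Dr = EE Q (\<lambda>fl. Dr (res x fl))"
    unfolding step_eq by (rule EE_map[OF setQ supp])
  also have "\<dots> \<le> EE Q (\<lambda>fl. Dr x - (\<Sum>p\<in>P. g p fl))"
  proof (rule EE_mono)
    fix fl assume "fl \<in> set_pmf Q"
    then have flB: "fl \<in> Bm" using setQ by blast
    show "Dr (res x fl) \<le> Dr x - (\<Sum>p\<in>P. g p fl)"
    proof (cases "\<exists>p\<in>P. fl = ind (fst p) (snd p)")
      case True
      then obtain p where p: "p \<in> P" "fl = ind (fst p) (snd p)" by blast
      have zero: "(\<Sum>q\<in>P - {p}. g q fl) = 0"
      proof (rule sum.neutral, intro ballI)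
        fix q assume q: "q \<in> P - {p}"
        have "fl \<noteq> ind (fst q) (snd q)"
        proof
          assume "fl = ind (fst q) (snd q)"
          moreover have "q \<in> pairs w x" "p \<in> pairs w x" using p q unfolding P_def by auto
          ultimately have "q = p" using ind_inj p(2) by metis
          with q show False by simp
        qed
        then show "g q fl = 0" unfolding g_def by simp
      qed
      have "(\<Sum>q\<in>P. g q fl) = g p fl + (\<Sum>q\<in>P - {p}. g q fl)"
        using finP p(1) by (rule sum.remove)
      then have s: "(\<Sum>q\<in>P. g q fl) = a p" using zero p unfolding g_def by simp
      obtain f c where pfc: "p = (f,c)" by (cases p)
      have pp: "(f,c) \<in> pairs w x" using p pfc unfolding P_def by simp
      have "res x fl = swap x f c" using res_ind[OF pp] p pfc by simp
      then have "Dr (res x fl) = Dr x - a p"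
        using weight_swap[OF pp] pfc unfolding Dr_def a_def by simp
      then show ?thesis using s by simp
    next
      case False
      then have "(\<Sum>q\<in>P. g q fl) = 0" unfolding g_def by (intro sum.neutral) auto
      moreover have "Dr (res x fl) \<le> Dr x" using res_inv(3)[OF xB flB] unfolding Dr_def by simp
      ultimately show ?thesis by simp
    qed
  qed
  also have "\<dots> = Dr x - (\<Sum>p\<in>P. a p * pmf Q (ind (fst p) (snd p)))"
  proof -
    have "EE Q (\<lambda>fl. Dr x - (\<Sum>p\<in>P. g p fl)) = Dr x - (\<Sum>p\<in>P. EE Q (g p))"
      unfolding EE_diff EE_const[OF setQ] EE_sum[OF finP] ..
    moreover have "EE Q (g p) = a p * pmf Q (ind (fst p) (snd p))" if "p \<in> P" for p
    proof -
      have "fst p < m" "snd p < m" using that unfolding P_def pairs_def by auto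
      then have "ind (fst p) (snd p) \<in> Bm" by (rule ind_Bm)
      then show ?thesis unfolding g_def by (rule EE_point)
    qed
    ultimately show ?thesis by simp
  qed
  also have "\<dots> \<le> Dr x - (\<Sum>p\<in>P. a p * \<delta>)"
  proof -
    have "(\<Sum>p\<in>P. a p * \<delta>) \<le> (\<Sum>p\<in>P. a p * pmf Q (ind (fst p) (snd p)))"
    proof (rule sum_mono)
      fix p assume p: "p \<in> P"
      obtain f c where pfc: "p = (f,c)" by (cases p)
      have "\<delta> \<le> pmf Q (ind f c)" using pmfQ[of f c x] p pfc unfolding P_def by simp
      then show "a p * \<delta> \<le> a p * pmf Q (ind (fst p) (snd p))"
        using a_nn[OF p] pfc by (simp add: mult_left_mono)
    qed
    then show ?thesis by simp
  qed
  also have "\<dots> \<le> Dr x - \<delta> * Dr x"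
  proof -
    obtain y where y: "is_st V m e y" "weight m w y = wopt" using wopt_ex by blast
    have ci: "int (weight m w x) - int (weight m w y) \<le> (\<Sum>p\<in>pairs w x. int (w (fst p)) - int (w (snd p)))"
      by (rule comb[OF Vne xst y(1)])
    then have "real_of_int (int (weight m w x) - int (weight m w y))
        \<le> real_of_int (\<Sum>p\<in>pairs w x. int (w (fst p)) - int (w (snd p)))"
      by (simp only: of_int_le_iff)
    then have "Dr x \<le> (\<Sum>p\<in>P. a p)" unfolding Dr_def a_def P_def using y(2) by simp
    then have "\<delta> * Dr x \<le> \<delta> * (\<Sum>p\<in>P. a p)" using delta_pos by (intro mult_left_mono) auto
    then show ?thesis by (simp add: sum_distrib_left mult.commute)
  qed
  also have "\<dots> = (1 - \<delta>) * Dr x" by (simp add: algebra_simps)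
  finally show ?thesis .
qed

end


context ea begin

definition "M t = map_pmf last (ea_traj V m e w x0 t)"

lemma traj_ne: "xs \<in> set_pmf (ea_traj V m e w x0 t) \<Longrightarrow> xs \<noteq> []"
  by (cases t) auto

lemma M_0: "M 0 = return_pmf x0" unfolding M_def by simp

lemma M_Suc: "M (Suc t) = bind_pmf (M t) (ea_step V m e w)"
  unfolding M_def by (simp add: map_bind_pmf map_pmf_comp bind_map_pmf)

lemma x0B: "x0 \<in> Bm" using x0m unfolding Bm_def by simp

lemma M_inv: "set_pmf (M t) \<subseteq> {x. x \<in> Bm \<and> is_st V m e x}"
proof (induction t)
  case 0 then show ?case using M_0 x0B x0st by simp
next
  case (Suc t)
  show ?case
  proof
    fix y assume "y \<in> set_pmf (M (Suc t))"
    then obtain x fl where x: "x \<in> set_pmf (M t)" and fl: "fl \<in> set_pmf Q" and y: "y = res x fl"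
      unfolding M_Suc step_eq by auto
    have "x \<in> Bm" "is_st V m e x" using x Suc by auto
    moreover have "fl \<in> Bm" using fl setQ by blast
    ultimately show "y \<in> {x. x \<in> Bm \<and> is_st V m e x}" using res_inv y by simp
  qed
qed

lemma M_B: "set_pmf (M t) \<subseteq> Bm" using M_inv by blast

lemma M_drift: "EE (M t) Dr \<le> (1 - \<delta>) ^ t * Dr x0"
proof (induction t)
  case 0
  have "EE (M 0) Dr = (\<Sum>a\<in>Bm. if a = x0 then Dr a else 0)"
    unfolding EE_def M_0 by (intro sum.cong) auto
  also have "\<dots> = Dr x0" using finBm x0B by simp
  finally show ?case by simp
next
  case (Suc t)
  have "EE (M (Suc t)) Dr = EE (M t) (\<lambda>x. EE (ea_step V m e w x) Dr)"
    unfolding M_Suc by (rule EE_bind[OF M_B])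
  also have "\<dots> \<le> EE (M t) (\<lambda>x. (1 - \<delta>) * Dr x)"
    using M_inv drift by (intro EE_mono) blast
  also have "\<dots> = (1 - \<delta>) * EE (M t) Dr" by (rule EE_cmult)
  also have "\<dots> \<le> (1 - \<delta>) * ((1 - \<delta>) ^ t * Dr x0)"
    using Suc delta_pos by (intro mult_left_mono) auto
  finally show ?case by simp
qed

lemma prob_bound:
  "measure_pmf.prob (ea_traj V m e w x0 t) {xs. \<forall>y\<in>set xs. \<not> is_mst V m e w y} \<le> (1 - \<delta>) ^ t * Dr x0"
proof -
  let ?T = "ea_traj V m e w x0 t"
  let ?S = "{xs. \<forall>y\<in>set xs. \<not> is_mst V m e w y}"
  let ?A = "{x. \<not> is_mst V m e w x}"
  have "measure_pmf.prob ?T ?S = measure_pmf.prob ?T (?S \<inter> set_pmf ?T)"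
    by (simp add: measure_Int_set_pmf)
  also have "\<dots> \<le> measure_pmf.prob ?T (last -` ?A)"
  proof (rule measure_pmf.finite_measure_mono)
    show "?S \<inter> set_pmf ?T \<subseteq> last -` ?A"
    proof
      fix xs assume xs: "xs \<in> ?S \<inter> set_pmf ?T"
      then have "xs \<noteq> []" using traj_ne by blast
      then have "last xs \<in> set xs" by simp
      then show "xs \<in> last -` ?A" using xs by auto
    qed
  qed simp
  also have "\<dots> = measure_pmf.prob (M t) ?A" unfolding M_def by simp
  also have "\<dots> = measure_pmf.prob (M t) (?A \<inter> set_pmf (M t))"
    by (simp add: measure_Int_set_pmf)
  also have "\<dots> \<le> measure_pmf.prob (M t) (?A \<inter> Bm)"
    using M_B by (intro measure_pmf.finite_measure_mono) auto
  also have "\<dots> = (\<Sum>a\<in>?A \<inter> Bm. pmf (M t) a)"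
    using finBm by (intro measure_measure_pmf_finite) simp
  also have "\<dots> = EE (M t) (\<lambda>a. if a \<in> ?A then 1 else 0)"
  proof -
    have "?A \<inter> Bm = {a\<in>Bm. a \<in> ?A}" by auto
    then show ?thesis unfolding EE_def using finBm by (simp add: sum.inter_filter) (intro sum.cong; simp)
  qed
  also have "\<dots> \<le> EE (M t) Dr"
  proof (rule EE_mono)
    fix x assume "x \<in> set_pmf (M t)"
    then have st: "is_st V m e x" using M_inv by blast
    show "(if x \<in> ?A then 1 else 0) \<le> Dr x"
    proof (cases "x \<in> ?A")
      case True
      then have "weight m w x \<noteq> wopt" using mst_iff[OF st] by simp
      then have "wopt + 1 \<le> weight m w x" using wopt_le[OF st] by simp
      then have "1 \<le> Dr x" unfolding Dr_def by linarith
      then show ?thesis using True by simp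
    next
      case False then show ?thesis using Dr_nonneg[OF st] by simp
    qed
  qed
  also have "\<dots> \<le> (1 - \<delta>) ^ t * Dr x0" by (rule M_drift)
  finally show ?thesis .
qed

end


context ea begin

lemma final:
  assumes wpos: "\<forall>i<m. w i > 0"
  shows "expected_opt_time V m e w x0
           \<le> ennreal (2 * exp 1 * real m ^ 2 * (1 + ln (real m) + ln (real (Max (w ` {0..<m})))))"
proof -
  define p where "p t = measure_pmf.prob (ea_traj V m e w x0 t) {xs. \<forall>y\<in>set xs. \<not> is_mst V m e w y}" for t
  define D0 where "D0 = Dr x0"
  define q where "q = 1 - \<delta>"
  define W where "W = Max (w ` {0..<m})"
  define B where "B = 2 * exp 1 * real m ^ 2 * (1 + ln (real m) + ln (real W))"
  have E: "expected_opt_time V m e w x0 = (\<Sum>t. ennreal (p t))"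
    unfolding expected_opt_time_def p_def ..
  have p_le: "p t \<le> q ^ t * D0" for t unfolding p_def q_def D0_def by (rule prob_bound)
  have p_le1: "p t \<le> 1" for t unfolding p_def by simp
  have p_nn: "0 \<le> p t" for t unfolding p_def by simp
  have dp: "0 < \<delta>" "\<delta> \<le> 1" by (rule delta_pos)+
  have q: "0 \<le> q" "q < 1" using dp unfolding q_def by auto
  have D0nn: "0 \<le> D0" unfolding D0_def by (rule Dr_nonneg[OF x0st])
  have wW: "w i \<le> W" if "i < m" for i unfolding W_def using that by (intro Max_ge) auto
  have W1: "1 \<le> W" using wW[of 0] wpos m1 by fastforce
  have m1r: "1 \<le> real m" using m1 by simp
  have lnm: "0 \<le> ln (real m)" using m1r by simp
  have lnW: "0 \<le> ln (real W)" using W1 by simp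
  have X1: "1 \<le> 1 + ln (real m) + ln (real W)" using lnm lnW by simp
  have c1: "1 \<le> exp 1 * real m ^ 2"
  proof -
    have "1 \<le> exp (1::real)" by simp
    moreover have "1 \<le> real m ^ 2" using m1 by simp
    ultimately show ?thesis using mult_mono[of 1 "exp 1" 1 "real m ^ 2"] by simp
  qed
  have B0: "0 \<le> B" unfolding B_def using X1 by simp
  show ?thesis
  proof (cases "D0 < 1")
    case True
    have "weight m w x0 \<le> wopt" using True unfolding D0_def Dr_def by linarith
    then have "D0 \<le> 0" unfolding D0_def Dr_def by simp
    then have "p t = 0" for t using p_le[of t] p_nn[of t] q
      by (metis D0nn antisym mult_zero_right order.trans)
    then have "expected_opt_time V m e w x0 = 0" unfolding E by simp
    then show ?thesis using B0 unfolding B_def W_def by simp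
  next
    case False
    then have D1: "1 \<le> D0" by simp
    define K where "K = nat \<lceil>ln D0 / \<delta>\<rceil>"
    have lnD: "0 \<le> ln D0" using D1 by simp
    have K1: "ln D0 / \<delta> \<le> real K" unfolding K_def by (rule real_nat_ceiling_ge)
    have K2: "real K \<le> ln D0 / \<delta> + 1"
    proof -
      have "0 \<le> ln D0 / \<delta>" using lnD dp by simp
      then have "real K = of_int \<lceil>ln D0 / \<delta>\<rceil>" unfolding K_def by simp
      also have "\<dots> \<le> ln D0 / \<delta> + 1" by (rule of_int_ceiling_le_add_one)
      finally show ?thesis .
    qed
    define g where "g t = (if t < K then 1 else D0 * q ^ t)" for t
    have g_nn: "0 \<le> g t" for t unfolding g_def using D0nn q by simp
    have pg: "p t \<le> g t" for t unfolding g_def using p_le1[of t] p_le[of t] by (simp add: mult.commute)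
    have gs: "g (n + K) = (D0 * q ^ K) * q ^ n" for n unfolding g_def by (simp add: power_add)
    have sumg_shift: "summable (\<lambda>n. g (n + K))"
      unfolding gs using q by (intro summable_mult summable_geometric) simp
    then have sumg: "summable g" by simp
    have "(\<Sum>n. g (n + K)) = (D0 * q ^ K) * (1 / (1 - q))"
      unfolding gs using q by (simp add: suminf_mult summable_geometric suminf_geometric)
    also have "1 - q = \<delta>" unfolding q_def by simp
    finally have tail: "(\<Sum>n. g (n + K)) = D0 * q ^ K / \<delta>" by simp
    have head: "(\<Sum>i<K. g i) = real K" unfolding g_def by simp
    have qK: "D0 * q ^ K \<le> 1"
    proof -
      have "q \<le> exp (- \<delta>)" using exp_ge_add_one_self[of "- \<delta>"] unfolding q_def by simp
      then have "q ^ K \<le> exp (- \<delta>) ^ K" using q by (intro power_mono) auto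
      also have "\<dots> = exp (real K * (- \<delta>))" by (rule exp_of_nat_mult[symmetric])
      also have "\<dots> \<le> exp (- ln D0)"
      proof -
        have "ln D0 \<le> real K * \<delta>" using K1 dp by (simp add: divide_le_eq)
        then show ?thesis by simp
      qed
      also have "\<dots> = 1 / D0" using D1 by (simp add: exp_minus inverse_eq_divide)
      finally have "q ^ K \<le> 1 / D0" .
      then have "D0 * q ^ K \<le> D0 * (1 / D0)" using D0nn by (intro mult_left_mono) auto
      then show ?thesis using D1 by simp
    qed
    have "(\<Sum>t. g t) = D0 * q ^ K / \<delta> + real K"
      using suminf_split_initial_segment[OF sumg, of K] tail head by simp
    also have "\<dots> \<le> 1 / \<delta> + (ln D0 / \<delta> + 1)"
      using qK dp K2 by (intro add_mono divide_right_mono) auto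
    also have "\<dots> = exp 1 * real m ^ 2 * (1 + ln D0) + 1"
      unfolding \<delta>_def by (simp add: field_simps)
    also have "\<dots> \<le> B"
    proof -
      have "D0 \<le> real (weight m w x0)" unfolding D0_def Dr_def by simp
      also have "weight m w x0 \<le> (\<Sum>i<m. W)"
        unfolding weight_def by (intro sum_mono) (use wW in auto)
      finally have "D0 \<le> real m * real W" by simp
      then have "ln D0 \<le> ln (real m * real W)" using D1 by (intro ln_mono) auto
      also have "\<dots> = ln (real m) + ln (real W)" using m1r W1 by (simp add: ln_mult)
      finally have "1 + ln D0 \<le> 1 + ln (real m) + ln (real W)" by simp
      then have a: "exp 1 * real m ^ 2 * (1 + ln D0) \<le> exp 1 * real m ^ 2 * (1 + ln (real m) + ln (real W))"
        by (intro mult_left_mono) auto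
      have "1 * 1 \<le> exp 1 * real m ^ 2 * (1 + ln (real m) + ln (real W))"
        using c1 X1 by (intro mult_mono) auto
      with a show ?thesis unfolding B_def by linarith
    qed
    finally have gB: "(\<Sum>t. g t) \<le> B" .
    have "(\<Sum>t. ennreal (p t)) \<le> (\<Sum>t. ennreal (g t))"
      by (intro suminf_le summableI ennreal_leI pg)
    also have "\<dots> = ennreal (\<Sum>t. g t)" by (rule suminf_ennreal2[OF g_nn sumg])
    also have "\<dots> \<le> ennreal B" using gB by (rule ennreal_leI)
    finally show ?thesis unfolding E B_def W_def .
  qed
qed

end

theorem theorem11:
  fixes V :: "'a set" and m :: nat and e :: "nat \<Rightarrow> 'a set"
    and w :: "nat \<Rightarrow> nat" and x0 :: "nat \<Rightarrow> bool"
  assumes "simple_graph V m e"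
    and "connected_on V e {0..<m}"
    and "m \<ge> 1"
    and "\<forall>i<m. w i > 0"
    and "\<forall>i\<ge>m. \<not> x0 i"
    and "is_st V m e x0"
  shows "expected_opt_time V m e w x0
           \<le> ennreal (2 * exp 1 * real m ^ 2 * (1 + ln (real m) + ln (real (Max (w ` {0..<m})))))"
proof -
  interpret ea V m e w x0
    by unfold_locales (use assms in auto)
  show ?thesis using final assms(4) by simp
qed

end
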